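(* Define $A_0=E_1$ and $B_0=E_2F_3q^{-G_1-G_3}-q^{-1}F_3q^{-G_1-G_3}E_2$, let $X=A_0B_0-q^{-2}B_0A_0$, and recursively for $k\ge1$ $$A_k=[2]_q^{-1}(A_{k-1}X-XA_{k-1}),\qquad B_k=[2]_q^{-1}(XB_{k-1}-B_{k-1}X).$$ Let $\mathcal E_\alpha(\zeta)=\sum_{k\ge0}A_k\zeta^k$, $\mathcal E_{\delta-\alpha}(\zeta)=\sum_{k\ge0}B_k\zeta^k$ and $\mathcal E'_\alpha(\zeta)=\zeta\bigl(\mathcal E_\alpha(\zeta)B_0-q^{-2}B_0\mathcal E_\alpha(\zeta)\bigr)$. Then in $\mathrm U_q(\mathfrak{gl}_3)[[\zeta]]$: (i) $B_0=F_1q^{-G_1-G_2}$; (ii) $\mathcal E_\alpha(\zeta)=\kappa_q^{-1}N'_{21}N'_{11}(-q^{-2}\zeta)^{-1}$; (iii) $\mathcal E_{\delta-\alpha}(\zeta)=\kappa_q^{-1}q^{-1}N'_{11}(-q^{-2}\zeta)^{-1}N'_{12}$; (iv) $1+\kappa_q\mathcal E'_\alpha(\zeta)=N'_{11}(-q^{-2}\zeta)^{-1}N''_{22}(-q^{-2}\zeta)$.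
   Context: Setting: $\hbar\in\mathbb C$, $q=e^\hbar$, $q^2\neq1$, $\kappa_q=q-q^{-1}$, $[\nu]_q=(q^\nu-q^{-\nu})/\kappa_q$ (so $[2]_q=q+q^{-1}$, assumed nonzero). Let $\mathfrak g=\mathbb CG_1\oplus\mathbb CG_2\oplus\mathbb CG_3$ and define linear forms $\alpha_1,\alpha_2$ on $\mathfrak g$ by $\alpha_1(G_1)=1,\alpha_1(G_2)=-1,\alpha_1(G_3)=0$, $\alpha_2(G_1)=0,\alpha_2(G_2)=1,\alpha_2(G_3)=-1$; put $H_1=G_1-G_2$, $H_2=G_2-G_3$. $\mathrm U_q(\mathfrak{gl}_3)$ is the unital associative $\mathbb C$-algebra generated by $E_1,E_2,F_1,F_2$ and symbols $q^X$, $X\in\mathfrak g$, with relations $q^0=1$, $q^{X_1}q^{X_2}=q^{X_1+X_2}$, $q^XE_iq^{-X}=q^{\alpha_i(X)}E_i$, $q^XF_iq^{-X}=q^{-\alpha_i(X)}F_i$, $[E_i,F_j]=\delta_{ij}(q^{H_i}-q^{-H_i})/\kappa_q$, and for $i\ne j$ the $q$-Serre relations $E_i^2E_j-[2]_qE_iE_jE_i+E_jE_i^2=0$, $F_i^2F_j-[2]_qF_iF_jF_i+F_jF_i^2=0$. For $\nu\in\mathbb C$ one writes $q^{X+\nu}=q^\nu q^X$. Further $E_3=E_1E_2-q^{-1}E_2E_1$, $F_3=F_2F_1-qF_1F_2$. Matrix entries: in $\mathrm U_q(\mathfrak{gl}_3)[[\zeta]]$ ($\zeta$ a formal variable; series with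 constant term $1$ are invertible) let $N'_{11}(\zeta)=1-\zeta q^{-2G_1}$, $N'_{22}(\zeta)=1-\zeta q^{-2G_2}$, $N'_{33}(\zeta)=1-\zeta q^{-2G_3}$, $N'_{12}=\kappa_q qF_1q^{-G_1-G_2}$, $N'_{23}=\kappa_q qF_2q^{-G_2-G_3}$, $N'_{13}=\kappa_q qF_3q^{-G_1-G_3}$, $N'_{21}=\kappa_qE_1$, $N'_{32}=\kappa_qE_2$, $N'_{31}=\kappa_qE_3$; and $N''_{22}(\zeta)=N'_{22}(\zeta)-\zeta N'_{21}N'_{11}(\zeta)^{-1}N'_{12}$, $N''_{23}(\zeta)=N'_{23}-N'_{21}N'_{11}(\zeta)^{-1}N'_{13}$, $N''_{32}(\zeta)=N'_{32}-\zeta N'_{31}N'_{11}(\zeta)^{-1}N'_{12}$, $N''_{33}(\zeta)=N'_{33}(\zeta)-\zeta N'_{31}N'_{11}(\zeta)^{-1}N'_{13}$, $N'''_{33}(\zeta)=N''_{33}(\zeta)-\zeta N''_{32}(\zeta)N''_{22}(\zeta)^{-1}N''_{23}(\zeta)$. For $c\in\mathbb C$, $N(c\zeta)$ denotes substitution $\zeta\mapsto c\zeta$. (Interpretation: $A_k$, $B_k$ are the images under Jimbo's evaluation homomorphism of the Khoroshkin–Tolstoy root vectors $e_{\alpha+k\delta}$, $e_{(\delta-\alpha)+k\delta}$ of $\mathrm U_q(\mathcal L(\mathfrak{sl}_3))$; this is not needed for the statement.) *)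

theory Defs
  imports Complex_Main "HOL-Computational_Algebra.Formal_Power_Series"
begin

text \<open>A representation-free rendering of U_q(gl_3): a unital complex algebra is a ring 'a
  together with a central unital ring homomorphism emb from the complex numbers.
  The symbols q^X, X = x1 G1 + x2 G2 + x3 G3 in g, are modelled by qx (x1,x2,x3).
  An identity holds in U_q(gl_3) iff it holds for every such data satisfying the
  defining relations (universal property), so the theorem quantifies over all of them.\<close>

record 'a Uq =
  emb :: "complex \<Rightarrow> 'a"
  hbar :: complex
  qx :: "complex \<times> complex \<times> complex \<Rightarrow> 'a"
  Eg1 :: 'a
  Eg2 :: 'a
  Fg1 :: 'a
  Fg2 :: 'a

definition qq :: "complex \<Rightarrow> complex" where
  "qq h = exp h"

definition qpow :: "complex \<Rightarrow> complex \<Rightarrow> complex" where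
  "qpow h \<nu> = exp (h * \<nu>)"

definition kap :: "complex \<Rightarrow> complex" where
  "kap h = qq h - inverse (qq h)"

definition br2 :: "complex \<Rightarrow> complex" where
  "br2 h = qq h + inverse (qq h)"

definition alpha1 :: "complex \<times> complex \<times> complex \<Rightarrow> complex" where
  "alpha1 X = (case X of (x1, x2, x3) \<Rightarrow> x1 - x2)"

definition alpha2 :: "complex \<times> complex \<times> complex \<Rightarrow> complex" where
  "alpha2 X = (case X of (x1, x2, x3) \<Rightarrow> x2 - x3)"

definition gadd :: "complex \<times> complex \<times> complex \<Rightarrow> complex \<times> complex \<times> complex \<Rightarrow> complex \<times> complex \<times> complex" where
  "gadd X Y = (case X of (x1, x2, x3) \<Rightarrow> case Y of (y1, y2, y3) \<Rightarrow> (x1 + y1, x2 + y2, x3 + y3))"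

definition gneg :: "complex \<times> complex \<times> complex \<Rightarrow> complex \<times> complex \<times> complex" where
  "gneg X = (case X of (x1, x2, x3) \<Rightarrow> (- x1, - x2, - x3))"

definition is_Uq_gl3 :: "('a::ring_1) Uq \<Rightarrow> bool" where
  "is_Uq_gl3 U \<longleftrightarrow>
     emb U 1 = 1 \<and>
     (\<forall>a b. emb U (a + b) = emb U a + emb U b) \<and>
     (\<forall>a b. emb U (a * b) = emb U a * emb U b) \<and>
     (\<forall>a x. emb U a * x = x * emb U a) \<and>
     qx U (0, 0, 0) = 1 \<and>
     (\<forall>X Y. qx U X * qx U Y = qx U (gadd X Y)) \<and>
     (\<forall>X. qx U X * Eg1 U * qx U (gneg X) = emb U (qpow (hbar U) (alpha1 X)) * Eg1 U) \<and>
     (\<forall>X. qx U X * Eg2 U * qx U (gneg X) = emb U (qpow (hbar U) (alpha2 X)) * Eg2 U) \<and>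
     (\<forall>X. qx U X * Fg1 U * qx U (gneg X) = emb U (qpow (hbar U) (- alpha1 X)) * Fg1 U) \<and>
     (\<forall>X. qx U X * Fg2 U * qx U (gneg X) = emb U (qpow (hbar U) (- alpha2 X)) * Fg2 U) \<and>
     Eg1 U * Fg1 U - Fg1 U * Eg1 U
       = emb U (inverse (kap (hbar U))) * (qx U (1, -1, 0) - qx U (-1, 1, 0)) \<and>
     Eg2 U * Fg2 U - Fg2 U * Eg2 U
       = emb U (inverse (kap (hbar U))) * (qx U (0, 1, -1) - qx U (0, -1, 1)) \<and>
     Eg1 U * Fg2 U - Fg2 U * Eg1 U = 0 \<and>
     Eg2 U * Fg1 U - Fg1 U * Eg2 U = 0 \<and>
     Eg1 U * Eg1 U * Eg2 U - emb U (br2 (hbar U)) * Eg1 U * Eg2 U * Eg1 U + Eg2 U * Eg1 U * Eg1 U = 0 \<and>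
     Eg2 U * Eg2 U * Eg1 U - emb U (br2 (hbar U)) * Eg2 U * Eg1 U * Eg2 U + Eg1 U * Eg2 U * Eg2 U = 0 \<and>
     Fg1 U * Fg1 U * Fg2 U - emb U (br2 (hbar U)) * Fg1 U * Fg2 U * Fg1 U + Fg2 U * Fg1 U * Fg1 U = 0 \<and>
     Fg2 U * Fg2 U * Fg1 U - emb U (br2 (hbar U)) * Fg2 U * Fg1 U * Fg2 U + Fg1 U * Fg2 U * Fg2 U = 0"

definition Eg3 :: "('a::ring_1) Uq \<Rightarrow> 'a" where
  "Eg3 U = Eg1 U * Eg2 U - emb U (inverse (qq (hbar U))) * Eg2 U * Eg1 U"

definition Fg3 :: "('a::ring_1) Uq \<Rightarrow> 'a" where
  "Fg3 U = Fg2 U * Fg1 U - emb U (qq (hbar U)) * Fg1 U * Fg2 U"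

text \<open>Two-sided inverse of a formal power series (exists and is unique when the constant
  term is 1)\<close>
definition fps_inv1 :: "('a::ring_1) fps \<Rightarrow> 'a fps" where
  "fps_inv1 f = (THE g. f * g = 1 \<and> g * f = 1)"

definition fps_scale :: "('a::ring_1) Uq \<Rightarrow> complex \<Rightarrow> 'a fps \<Rightarrow> 'a fps" where
  "fps_scale U c f = Abs_fps (\<lambda>n. emb U (c ^ n) * fps_nth f n)"

definition N'11 :: "('a::ring_1) Uq \<Rightarrow> 'a fps" where
  "N'11 U = 1 - fps_X * fps_const (qx U (-2, 0, 0))"

definition N'22 :: "('a::ring_1) Uq \<Rightarrow> 'a fps" where
  "N'22 U = 1 - fps_X * fps_const (qx U (0, -2, 0))"

definition N'12 :: "('a::ring_1) Uq \<Rightarrow> 'a fps" where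
  "N'12 U = fps_const (emb U (kap (hbar U) * qq (hbar U)) * Fg1 U * qx U (-1, -1, 0))"

definition N'21 :: "('a::ring_1) Uq \<Rightarrow> 'a fps" where
  "N'21 U = fps_const (emb U (kap (hbar U)) * Eg1 U)"

definition N''22 :: "('a::ring_1) Uq \<Rightarrow> 'a fps" where
  "N''22 U = N'22 U - fps_X * N'21 U * fps_inv1 (N'11 U) * N'12 U"

definition A0 :: "('a::ring_1) Uq \<Rightarrow> 'a" where
  "A0 U = Eg1 U"

definition B0 :: "('a::ring_1) Uq \<Rightarrow> 'a" where
  "B0 U = Eg2 U * Fg3 U * qx U (-1, 0, -1)
          - emb U (inverse (qq (hbar U))) * Fg3 U * qx U (-1, 0, -1) * Eg2 U"

definition Xel :: "('a::ring_1) Uq \<Rightarrow> 'a" where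
  "Xel U = A0 U * B0 U - emb U (inverse (qq (hbar U)) ^ 2) * B0 U * A0 U"

primrec Ak :: "('a::ring_1) Uq \<Rightarrow> nat \<Rightarrow> 'a" where
  "Ak U 0 = A0 U"
| "Ak U (Suc k) = emb U (inverse (br2 (hbar U))) * (Ak U k * Xel U - Xel U * Ak U k)"

primrec Bk :: "('a::ring_1) Uq \<Rightarrow> nat \<Rightarrow> 'a" where
  "Bk U 0 = B0 U"
| "Bk U (Suc k) = emb U (inverse (br2 (hbar U))) * (Xel U * Bk U k - Bk U k * Xel U)"

definition E_alpha :: "('a::ring_1) Uq \<Rightarrow> 'a fps" where
  "E_alpha U = Abs_fps (Ak U)"

definition E_delta_alpha :: "('a::ring_1) Uq \<Rightarrow> 'a fps" where
  "E_delta_alpha U = Abs_fps (Bk U)"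

definition E'_alpha :: "('a::ring_1) Uq \<Rightarrow> 'a fps" where
  "E'_alpha U = fps_X * (E_alpha U * fps_const (B0 U)
                 - fps_const (emb U (inverse (qq (hbar U)) ^ 2)) * fps_const (B0 U) * E_alpha U)"

end

theory Submission imports Defs begin

unbundle fps_syntax

locale uq = fixes U :: "'a::ring_1 Uq" assumes ax: "is_Uq_gl3 U"
  and q2: "(qq (hbar U))^2 \<noteq> 1" and b2: "br2 (hbar U) \<noteq> 0"
begin
abbreviation "e \<equiv> emb U"
abbreviation "h \<equiv> hbar U"
abbreviation "q \<equiv> qq (hbar U)"
abbreviation "E1 \<equiv> Eg1 U"
abbreviation "E2 \<equiv> Eg2 U"
abbreviation "F1 \<equiv> Fg1 U"
abbreviation "F2 \<equiv> Fg2 U"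
abbreviation "Q \<equiv> qx U"

lemma e1: "e 1 = 1" using ax unfolding is_Uq_gl3_def by blast
lemma eadd: "e (a+b) = e a + e b" using ax unfolding is_Uq_gl3_def by blast
lemma emul: "e (a*b) = e a * e b" using ax unfolding is_Uq_gl3_def by blast
lemma ecomm: "e a * x = x * e a" using ax unfolding is_Uq_gl3_def by blast
lemma e0: "e 0 = 0" using eadd[of 0 0] by simp
lemma eneg: "e (-a) = - e a" using eadd[of a "-a"] e0 by (metis add.right_inverse minus_unique)
lemma ediff: "e (a-b) = e a - e b" using eadd[of a "-b"] eneg by simp
lemma Q0: "Q (0,0,0) = 1" using ax unfolding is_Uq_gl3_def by blast
lemma Qm: "Q X * Q Y = Q (gadd X Y)" using ax unfolding is_Uq_gl3_def by blast
lemma QnegQ: "Q (gneg X) * Q X = 1"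
  by (cases X) (simp add: Qm gadd_def gneg_def Q0)
lemma QQneg: "Q X * Q (gneg X) = 1"
  by (cases X) (simp add: Qm gadd_def gneg_def Q0)

lemma rE1: "Q X * E1 * Q (gneg X) = e (qpow h (alpha1 X)) * E1" using ax unfolding is_Uq_gl3_def by blast
lemma rE2: "Q X * E2 * Q (gneg X) = e (qpow h (alpha2 X)) * E2" using ax unfolding is_Uq_gl3_def by blast
lemma rF1: "Q X * F1 * Q (gneg X) = e (qpow h (- alpha1 X)) * F1" using ax unfolding is_Uq_gl3_def by blast
lemma rF2: "Q X * F2 * Q (gneg X) = e (qpow h (- alpha2 X)) * F2" using ax unfolding is_Uq_gl3_def by blast

lemma qE1: "Q X * E1 = e (qpow h (alpha1 X)) * (E1 * Q X)"
proof -
  have "Q X * E1 = Q X * E1 * (Q (gneg X) * Q X)" by (simp add: QnegQ)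
  also have "\<dots> = (Q X * E1 * Q (gneg X)) * Q X" by (simp add: mult.assoc)
  also have "\<dots> = e (qpow h (alpha1 X)) * (E1 * Q X)" using rE1 rE2 rF1 rF2 by (simp add: mult.assoc)
  finally show ?thesis .
qed
lemma qE2: "Q X * E2 = e (qpow h (alpha2 X)) * (E2 * Q X)"
proof -
  have "Q X * E2 = Q X * E2 * (Q (gneg X) * Q X)" by (simp add: QnegQ)
  also have "\<dots> = (Q X * E2 * Q (gneg X)) * Q X" by (simp add: mult.assoc)
  also have "\<dots> = e (qpow h (alpha2 X)) * (E2 * Q X)" using rE1 rE2 rF1 rF2 by (simp add: mult.assoc)
  finally show ?thesis .
qed
lemma qF1: "Q X * F1 = e (qpow h (- alpha1 X)) * (F1 * Q X)"
proof -
  have "Q X * F1 = Q X * F1 * (Q (gneg X) * Q X)" by (simp add: QnegQ)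
  also have "\<dots> = (Q X * F1 * Q (gneg X)) * Q X" by (simp add: mult.assoc)
  also have "\<dots> = e (qpow h (- alpha1 X)) * (F1 * Q X)" using rE1 rE2 rF1 rF2 by (simp add: mult.assoc)
  finally show ?thesis .
qed
lemma qF2: "Q X * F2 = e (qpow h (- alpha2 X)) * (F2 * Q X)"
proof -
  have "Q X * F2 = Q X * F2 * (Q (gneg X) * Q X)" by (simp add: QnegQ)
  also have "\<dots> = (Q X * F2 * Q (gneg X)) * Q X" by (simp add: mult.assoc)
  also have "\<dots> = e (qpow h (- alpha2 X)) * (F2 * Q X)" using rE1 rE2 rF1 rF2 by (simp add: mult.assoc)
  finally show ?thesis .
qed

lemma cE1F1: "E1 * F1 - F1 * E1 = e (inverse (kap h)) * (Q (1,-1,0) - Q (-1,1,0))"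
  using ax unfolding is_Uq_gl3_def by blast
lemma cE2F2: "E2 * F2 - F2 * E2 = e (inverse (kap h)) * (Q (0,1,-1) - Q (0,-1,1))"
  using ax unfolding is_Uq_gl3_def by blast
lemma cE1F2: "E1 * F2 - F2 * E1 = 0"
  using ax unfolding is_Uq_gl3_def by blast
lemma cE2F1: "E2 * F1 - F1 * E2 = 0"
  using ax unfolding is_Uq_gl3_def by blast
lemma E1F1: "E1 * F1 = F1 * E1 + e (inverse (kap h)) * (Q (1,-1,0) - Q (-1,1,0))"
  using cE1F1 by (metis diff_eq_eq add.commute)
lemma E2F2: "E2 * F2 = F2 * E2 + e (inverse (kap h)) * (Q (0,1,-1) - Q (0,-1,1))"
  using cE2F2 by (metis diff_eq_eq add.commute)
lemma E1F2: "E1 * F2 = F2 * E1" using cE1F2 by simp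
lemma E2F1: "E2 * F1 = F1 * E2" using cE2F1 by simp

lemma nest: fixes a b c y :: 'a assumes "a * b = c" shows "a * (b * y) = c * y"
proof -
  have "a * (b * y) = (a * b) * y" by (rule mult.assoc[symmetric])
  thus ?thesis using assms by simp
qed

lemmas base = qE1 qE2 qF1 qF2 E1F1 E2F2 E1F2 E2F1 Qm
lemmas nested = base[THEN nest]

lemma ecA: "(x::'a) * e a = e a * x" by (simp add: ecomm)
lemma ecB: "(x::'a) * (e a * y) = e a * (x * y)" by (metis ecomm mult.assoc)
lemma eeA: "e a * e b = e (a*b)" by (simp add: emul)
lemma eeB: "e a * (e b * y) = e (a*b) * y" by (simp add: emul mult.assoc[symmetric])

lemma ecQA: "Q X * e a = e a * Q X" by (simp add: ecomm)
lemma ecQB: "Q X * (e a * y) = e a * (Q X * y)" by (metis ecomm mult.assoc)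
lemmas ecs = ecA[of E1] ecA[of E2] ecA[of F1] ecA[of F2] ecQA
             ecB[of E1] ecB[of E2] ecB[of F1] ecB[of F2] ecQB eeA eeB

lemma qpow_num: "qpow h (numeral n) = q ^ numeral n"
  unfolding qpow_def qq_def by (metis exp_of_nat_mult mult.commute of_nat_numeral)
lemma qpow_negnum: "qpow h (- numeral n) = inverse q ^ numeral n"
proof -
  have "qpow h (- numeral n) = inverse (qpow h (numeral n))" by (simp add: qpow_def exp_minus[symmetric])
  thus ?thesis by (simp add: qpow_num power_inverse)
qed
lemma qpow_0: "qpow h 0 = 1" by (simp add: qpow_def)
lemma qpow_1: "qpow h 1 = q" by (simp add: qpow_def qq_def)
lemma qpow_m1: "qpow h (-1) = inverse q" by (simp add: qpow_def qq_def exp_minus)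

lemmas nf = base nested ecs qpow_num qpow_negnum qpow_0 qpow_1 qpow_m1 e1 e0
   algebra_simps alpha1_def alpha2_def gadd_def gneg_def

lemma q_nz: "q \<noteq> 0" by (simp add: qq_def)
lemma kap_eq: "kap h = q - inverse q" by (simp add: kap_def)
lemma k: "kap h \<noteq> 0"
proof
  assume "kap h = 0"
  hence "q * q - 1 = 0" using q_nz unfolding kap_eq by (simp add: field_simps)
  thus False using q2 by (simp add: power2_eq_square)
qed

lemma partI: "B0 U = F1 * Q (-1,-1,0)"
proof -
  have c: "e (q * inverse (kap h)) = 1 + e (inverse (kap h) * inverse q)"
    unfolding e1[symmetric] eadd[symmetric] using k q_nz unfolding kap_eq
    by (auto simp: field_simps)
  show ?thesis
  unfolding B0_def Fg3_def
  apply (simp add: nf q_nz c)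
  done
qed

lemma qq2: "q^2 * (inverse q)^2 = 1" using q_nz by (simp add: power_mult_distrib[symmetric])
lemma qq4: "q^2 * inverse q ^ 4 = (inverse q)^2" using q_nz by (simp add: field_simps)
lemma ecol: "a = b + c \<Longrightarrow> e a = e b + e c" by (simp add: eadd)
lemma br2_eq: "br2 h = q + inverse q" by (simp add: br2_def)

lemma Xeq: "Xel U = E1 * (F1 * Q (-1,-1,0)) - e (inverse q ^ 2) * (F1 * (Q (-1,-1,0) * E1))"
  unfolding Xel_def A0_def partI by (simp add: mult.assoc)

lemma XK1: "Xel U * Q (-2,0,0) = Q (-2,0,0) * Xel U"
  unfolding Xeq
  apply (simp add: nf q_nz qq2 qq4)
  done

lemma EX: "E1 * Xel U - Xel U * E1 = e (- (inverse q ^ 2) * br2 h) * (E1 * Q (-2,0,0))"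
proof -
  have c: "e (inverse (kap h) * inverse q ^ 4) = e (inverse (kap h)) + e (- (br2 h * (inverse q)\<^sup>2))"
    apply (rule ecol) using q_nz k unfolding kap_eq br2_eq by (simp add: field_simps; simp add: eval_nat_numeral algebra_simps)
  show ?thesis
  unfolding Xeq
  apply (simp add: nf q_nz qq2 qq4 c)
  done
qed

lemma XB: "Xel U * B0 U - B0 U * Xel U = e (- (inverse q ^ 2) * br2 h) * (Q (-2,0,0) * B0 U)"
proof -
  have c: "e (inverse (kap h) * (inverse q)\<^sup>2) = e (inverse (kap h) * q\<^sup>2) + e (- br2 h)"
    apply (rule ecol) using q_nz k unfolding kap_eq br2_eq by (simp add: field_simps; simp add: eval_nat_numeral algebra_simps)
  show ?thesis
  unfolding Xeq partI
  apply (simp add: nf q_nz qq2 qq4 c)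
  done
qed

definition Kn :: "nat \<Rightarrow> 'a" where "Kn n = Q (-2 * of_nat n, 0, 0)"
abbreviation "cc \<equiv> - (inverse q ^ 2)"

lemma Kn0: "Kn 0 = 1" by (simp add: Q0 Kn_def)
lemma KnS: "Kn (Suc n) = Kn n * Q (-2,0,0)"
proof -
  have "(-2 * of_nat (Suc n), 0::complex, 0::complex) = gadd (-2 * of_nat n, 0, 0) (-2, 0, 0)"
    by (simp add: gadd_def algebra_simps)
  thus ?thesis unfolding Kn_def by (simp only: Qm)
qed
lemma KnS': "Kn (Suc n) = Q (-2,0,0) * Kn n"
proof -
  have "(-2 * of_nat (Suc n), 0::complex, 0::complex) = gadd (-2, 0, 0) (-2 * of_nat n, 0, 0)"
    by (simp add: gadd_def algebra_simps)
  thus ?thesis unfolding Kn_def by (simp only: Qm)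
qed
lemma XKn: "Xel U * Kn n = Kn n * Xel U"
proof (induction n)
  case 0 thus ?case by (simp add: Kn0)
next
  case (Suc n)
  have "Xel U * Kn (Suc n) = (Xel U * Kn n) * Q (-2,0,0)" unfolding KnS by (simp only: mult.assoc)
  also have "\<dots> = Kn n * (Xel U * Q (-2,0,0))" by (simp add: Suc mult.assoc)
  also have "\<dots> = Kn (Suc n) * Xel U" by (simp add: XK1 KnS mult.assoc)
  finally show ?case .
qed

lemma brinv: "e (inverse (br2 h)) * e (cc * br2 h) = e cc"
proof -
  have "inverse (br2 h) * (cc * br2 h) = cc" using b2 by (simp add: field_simps)
  thus ?thesis by (simp only: emul[symmetric])
qed

lemma Ak_eq: "Ak U n = e (cc ^ n) * (E1 * Kn n)"
proof (induction n)
  case 0 thus ?case by (simp add: A0_def Kn0 e1)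
next
  case (Suc n)
  have "Ak U n * Xel U - Xel U * Ak U n = e (cc ^ n) * (E1 * (Kn n * Xel U)) - e (cc ^ n) * (Xel U * (E1 * Kn n))"
    by (simp add: Suc mult.assoc ecB[of "Xel U"])
  also have "\<dots> = e (cc ^ n) * ((E1 * Xel U) * Kn n) - e (cc ^ n) * ((Xel U * E1) * Kn n)"
    by (simp add: mult.assoc XKn)
  also have "\<dots> = e (cc ^ n) * ((E1 * Xel U - Xel U * E1) * Kn n)"
    by (simp add: algebra_simps)
  also have "\<dots> = e (cc ^ n) * e (cc * br2 h) * (E1 * (Q (-2,0,0) * Kn n))"
    by (simp add: EX mult.assoc)
  finally have "Ak U (Suc n) = e (inverse (br2 h)) * (e (cc ^ n) * e (cc * br2 h) * (E1 * Kn (Suc n)))"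
    by (simp only: Ak.simps KnS')
  also have "\<dots> = e (inverse (br2 h) * (cc ^ n * (cc * br2 h))) * (E1 * Kn (Suc n))"
    by (simp only: emul mult.assoc)
  also have "inverse (br2 h) * (cc ^ n * (cc * br2 h)) = cc ^ Suc n" using b2 by (simp add: field_simps)
  finally show ?case .
qed

lemma Bk_eq: "Bk U n = e (cc ^ n) * (Kn n * B0 U)"
proof (induction n)
  case 0 thus ?case by (simp add: Kn0 e1)
next
  case (Suc n)
  have "Xel U * Bk U n - Bk U n * Xel U = e (cc ^ n) * (Xel U * (Kn n * B0 U)) - e (cc ^ n) * (Kn n * (B0 U * Xel U))"
    by (simp add: Suc mult.assoc ecB[of "Xel U"])
  also have "\<dots> = e (cc ^ n) * (Kn n * (Xel U * B0 U)) - e (cc ^ n) * (Kn n * (B0 U * Xel U))"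
    by (simp add: mult.assoc XKn[THEN nest])
  also have "\<dots> = e (cc ^ n) * (Kn n * (Xel U * B0 U - B0 U * Xel U))"
    by (simp add: algebra_simps)
  also have "\<dots> = e (cc ^ n) * e (cc * br2 h) * (Kn n * (Q (-2,0,0) * B0 U))"
    by (simp add: XB mult.assoc ecB[of "Kn n"])
  finally have "Bk U (Suc n) = e (inverse (br2 h)) * (e (cc ^ n) * e (cc * br2 h) * (Kn (Suc n) * B0 U))"
    by (simp only: Bk.simps KnS mult.assoc)
  also have "\<dots> = e (inverse (br2 h) * (cc ^ n * (cc * br2 h))) * (Kn (Suc n) * B0 U)"
    by (simp only: emul mult.assoc)
  also have "inverse (br2 h) * (cc ^ n * (cc * br2 h)) = cc ^ Suc n" using b2 by (simp add: field_simps)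
  finally show ?case .
qed

lemma inv_unique: fixes M G :: "'a fps" assumes "M * G = 1" "G * M = 1" shows "fps_inv1 M = G"
  unfolding fps_inv1_def
proof (rule the_equality)
  show "M * G = 1 \<and> G * M = 1" using assms by simp
next
  fix g assume g: "M * g = 1 \<and> g * M = 1"
  have "g = (G * M) * g" using assms by simp
  also have "\<dots> = G * (M * g)" by (simp only: mult.assoc)
  finally show "g = G" using g by simp
qed

definition Gs :: "complex \<Rightarrow> 'a fps" where "Gs d = Abs_fps (\<lambda>n. e (d ^ n) * Kn n)"

lemma scaleN11_nth: "fps_scale U d (N'11 U) $ n = (if n = 0 then 1 else if n = 1 then - (e d * Q (-2,0,0)) else 0)"
  by (simp add: fps_scale_def N'11_def e1)

lemma MG: "fps_scale U d (N'11 U) * Gs d = 1"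
proof (rule fps_ext)
  fix n
  show "(fps_scale U d (N'11 U) * Gs d) $ n = 1 $ n"
  proof (cases n)
    case 0 thus ?thesis by (simp add: fps_mult_nth scaleN11_nth Gs_def e1 Kn0)
  next
    case (Suc m)
    have "(fps_scale U d (N'11 U) * Gs d) $ n = (\<Sum>i=0..n. fps_scale U d (N'11 U) $ i * Gs d $ (n - i))"
      by (rule fps_mult_nth)
    also have "\<dots> = (\<Sum>i\<in>{0,1}. fps_scale U d (N'11 U) $ i * Gs d $ (n - i))"
      by (rule sum.mono_neutral_right) (auto simp: scaleN11_nth Suc)
    also have "\<dots> = Gs d $ n - e d * Q (-2,0,0) * Gs d $ m" by (simp add: scaleN11_nth Suc)
    also have "\<dots> = 0" by (simp add: Gs_def Suc KnS' mult.assoc ecQB eeB mult.commute)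
    finally show ?thesis using Suc by simp
  qed
qed

lemma GM: "Gs d * fps_scale U d (N'11 U) = 1"
proof (rule fps_ext)
  fix n
  show "(Gs d * fps_scale U d (N'11 U)) $ n = 1 $ n"
  proof (cases n)
    case 0 thus ?thesis by (simp add: fps_mult_nth scaleN11_nth Gs_def e1 Kn0)
  next
    case (Suc m)
    have "(Gs d * fps_scale U d (N'11 U)) $ n = (\<Sum>i=0..n. Gs d $ i * fps_scale U d (N'11 U) $ (n - i))"
      by (rule fps_mult_nth)
    also have "\<dots> = (\<Sum>i\<in>{n-1,n}. Gs d $ i * fps_scale U d (N'11 U) $ (n - i))"
      by (rule sum.mono_neutral_right) (auto simp: scaleN11_nth Suc)
    also have "\<dots> = Gs d $ n - Gs d $ m * (e d * Q (-2,0,0))" by (simp add: scaleN11_nth Suc)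
    also have "\<dots> = 0" by (simp add: Gs_def Suc KnS mult.assoc ecB[of "Kn m"] eeB eeA mult.commute)
    finally show ?thesis using Suc by simp
  qed
qed

lemma invG: "fps_inv1 (fps_scale U d (N'11 U)) = Gs d"
  by (rule inv_unique[OF MG GM])

lemma partII: "E_alpha U = fps_const (e (inverse (kap h))) * N'21 U * fps_inv1 (fps_scale U cc (N'11 U))"
proof (rule fps_ext)
  fix n
  have eq: "inverse (kap h) * (kap h * cc ^ n) = cc ^ n" using k by simp
  show "E_alpha U $ n = (fps_const (e (inverse (kap h))) * N'21 U * fps_inv1 (fps_scale U cc (N'11 U))) $ n"
    apply (simp add: invG E_alpha_def N'21_def Gs_def Ak_eq mult.assoc ecs)
    by (simp only: eq)
qed

lemma partIII: "E_delta_alpha U = fps_const (e (inverse (kap h) * inverse q))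
                     * fps_inv1 (fps_scale U cc (N'11 U)) * N'12 U"
proof (rule fps_ext)
  fix n
  have eq: "inverse (kap h) * (inverse q * (cc ^ n * (kap h * q))) = cc ^ n" using k q_nz by (simp add: field_simps)
  show "E_delta_alpha U $ n = (fps_const (e (inverse (kap h) * inverse q))
                     * fps_inv1 (fps_scale U cc (N'11 U)) * N'12 U) $ n"
    apply (simp add: invG E_delta_alpha_def N'12_def Gs_def Bk_eq partI mult.assoc ecs ecB[of "Kn n"])
    by (simp only: eq)
qed

lemma qpow_m2n: "qpow h (- 2 * of_nat j - 0) = inverse q ^ (2*j)"
proof -
  have "qpow h (- 2 * of_nat j - 0) = inverse (exp (of_nat (2*j) * h))"
    by (simp add: qpow_def exp_minus[symmetric] algebra_simps)
  thus ?thesis by (simp only: exp_of_nat_mult qq_def power_inverse)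
qed
lemma qpow_2n: "qpow h (- (- 2 * of_nat j - 0)) = q ^ (2*j)"
proof -
  have "qpow h (- (- 2 * of_nat j - 0)) = exp (of_nat (2*j) * h)"
    by (simp add: qpow_def algebra_simps)
  thus ?thesis by (simp only: exp_of_nat_mult qq_def)
qed

lemma KnE1: "Kn j * E1 = e (inverse q ^ (2*j)) * (E1 * Kn j)"
  unfolding Kn_def qE1 alpha1_def by (simp only: qpow_m2n prod.case)
lemma KnF1: "Kn j * F1 = e (q ^ (2*j)) * (F1 * Kn j)"
  unfolding Kn_def qF1 alpha1_def by (simp only: qpow_2n prod.case)
lemma KnQ: "Kn j * Q X = Q X * Kn j"
  unfolding Kn_def Qm by (cases X) (simp add: gadd_def add.commute)
lemma KnE: "Kn j * e a = e a * Kn j" by (simp add: ecomm)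
lemma KnE': "Kn j * (e a * y) = e a * (Kn j * y)" by (metis ecomm mult.assoc)
lemmas Knrules = KnE1 KnF1 KnQ KnE KnE' KnE1[THEN nest] KnF1[THEN nest] KnQ[THEN nest]

lemma scale1: "fps_scale U 1 f = f" by (simp add: fps_scale_def e1 fps_nth_inverse)

lemma N''22_nth: "N''22 U $ n = (if n = 0 then 1 else 0) - (if n = 1 then Q (0,-2,0) else 0)
   - (if n = 0 then 0 else (e (kap h) * E1) * (Kn (n - 1) * (e (kap h * q) * F1 * Q (-1,-1,0))))"
proof -
  have "fps_inv1 (N'11 U) = Gs 1" using invG[of 1] by (simp add: scale1)
  thus ?thesis unfolding N''22_def
    by (simp add: N'22_def N'21_def N'12_def mult.assoc Gs_def e1)
qed

abbreviation "LL \<equiv> 1 + fps_const (e (kap h)) * E'_alpha U"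

lemma LL_nth: "LL $ n = (if n = 0 then 1 else e (kap h) * (Ak U (n-1) * B0 U - e (inverse q ^ 2) * (B0 U * Ak U (n-1))))"
  by (simp add: E'_alpha_def E_alpha_def mult.assoc)

lemma MulL_nth: "(fps_scale U cc (N'11 U) * LL) $ Suc m = LL $ Suc m - e cc * Q (-2,0,0) * LL $ m"
proof -
  have "(fps_scale U cc (N'11 U) * LL) $ Suc m = (\<Sum>i=0..Suc m. fps_scale U cc (N'11 U) $ i * LL $ (Suc m - i))"
    by (rule fps_mult_nth)
  also have "\<dots> = (\<Sum>i\<in>{0,1}. fps_scale U cc (N'11 U) $ i * LL $ (Suc m - i))"
    by (rule sum.mono_neutral_right) (auto simp: scaleN11_nth)
  also have "\<dots> = LL $ Suc m - e cc * Q (-2,0,0) * LL $ m" by (simp add: scaleN11_nth)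
  finally show ?thesis .
qed

lemma case1: "(fps_scale U cc (N'11 U) * LL) $ 1 = fps_scale U cc (N''22 U) $ 1"
proof -
  have c1': "- (kap h * (kap h * (q * (inverse (kap h) * (inverse q)\<^sup>2)))) = -1 - cc"
    using k q_nz unfolding kap_eq by (simp add: field_simps power2_eq_square)
  have c1: "e (- (kap h * (kap h * (q * (inverse (kap h) * (inverse q)\<^sup>2))))) = - 1 - e cc"
    by (simp only: c1' ediff eneg e1)
  have c2': "- (kap h * (kap h * (q * (inverse q)\<^sup>2))) = kap h * (inverse q)\<^sup>2 - kap h"
    using k q_nz unfolding kap_eq by (simp add: field_simps power2_eq_square)
  have c2: "e (- (kap h * (kap h * (q * (inverse q)\<^sup>2)))) = e (kap h * (inverse q)\<^sup>2) - e (kap h)"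
    by (simp only: c2' ediff)
  show ?thesis
  apply (simp only: One_nat_def MulL_nth LL_nth)
  apply (simp add: LL_nth fps_scale_def N''22_nth partI A0_def Kn0 nf q_nz qq2 qq4 k)
  apply (simp add: c1 c2 algebra_simps)
  done
qed

lemma ecol2: "a = b - c \<Longrightarrow> e a = e b - e c" by (simp add: ediff)

lemma s1: "kap h * (kap h * (q * (q\<^sup>2 * (inverse q ^ 4 * P)))) = - (kap h * ((inverse q)\<^sup>2 * P)) - - (kap h * (q\<^sup>2 * ((inverse q)\<^sup>2 * P)))"
  using k q_nz unfolding kap_eq by (simp add: field_simps power2_eq_square) (simp add: algebra_simps eval_nat_numeral)
lemma s2: "kap h * (kap h * (q * (inverse (kap h) * (q\<^sup>2 * (inverse q ^ 4 * P))))) = - (kap h * (inverse (kap h) * ((inverse q)\<^sup>2 * P))) - - (kap h * (inverse (kap h) * (q\<^sup>2 * ((inverse q)\<^sup>2 * P))))"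
proof -
  have "kap h * (kap h * (q * (inverse (kap h) * (q\<^sup>2 * (inverse q ^ 4 * P))))) = kap h * (q * (q\<^sup>2 * (inverse q ^ 4 * P)))"
    using k by (simp add: field_simps)
  moreover have "- (kap h * (inverse (kap h) * ((inverse q)\<^sup>2 * P))) - - (kap h * (inverse (kap h) * (q\<^sup>2 * ((inverse q)\<^sup>2 * P)))) = - ((inverse q)\<^sup>2 * P) + (q\<^sup>2 * ((inverse q)\<^sup>2 * P))"
    using k by (simp add: field_simps)
  moreover have "kap h * (q * (q\<^sup>2 * (inverse q ^ 4 * P))) = - ((inverse q)\<^sup>2 * P) + (q\<^sup>2 * ((inverse q)\<^sup>2 * P))"
    using q_nz unfolding kap_eq by (simp add: field_simps power2_eq_square) (simp add: algebra_simps eval_nat_numeral)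
  ultimately show ?thesis by simp
qed

lemma case2: "(fps_scale U cc (N'11 U) * LL) $ Suc (Suc j) = fps_scale U cc (N''22 U) $ Suc (Suc j)"
proof -
  have t: "q ^ (j * 2) * (inverse q ^ 4 * cc ^ j) = inverse q ^ 4 * (q ^ (j * 2) * cc ^ j)" by (simp only: mult.left_commute)
  have r1: "e (kap h * (kap h * (q * (q\<^sup>2 * (q ^ (j * 2) * (inverse q ^ 4 * cc ^ j)))))) = e (- (kap h * ((inverse q)\<^sup>2 * (q ^ (j * 2) * cc ^ j)))) - e (- (kap h * (q\<^sup>2 * ((inverse q)\<^sup>2 * (q ^ (j * 2) * cc ^ j)))))"
    apply (rule ecol2) unfolding t by (rule s1)
  have r2: "e (kap h * (kap h * (q * (inverse (kap h) * (q\<^sup>2 * (q ^ (j * 2) * (inverse q ^ 4 * cc ^ j))))))) = e (- (kap h * (inverse (kap h) * ((inverse q)\<^sup>2 * (q ^ (j * 2) * cc ^ j))))) - e (- (kap h * (inverse (kap h) * (q\<^sup>2 * ((inverse q)\<^sup>2 * (q ^ (j * 2) * cc ^ j))))))"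
    apply (rule ecol2) unfolding t by (rule s2)
  show ?thesis
  apply (simp only: MulL_nth LL_nth)
  apply (simp add: fps_scale_def N''22_nth partI Ak_eq KnS' nf Knrules q_nz qq2 qq4 k del: Ak.simps)
  apply (simp only: r1 r2)
  apply (simp add: algebra_simps)
  done
qed

lemma partIV: "LL = fps_inv1 (fps_scale U cc (N'11 U)) * fps_scale U cc (N''22 U)"
proof -
  have hML: "fps_scale U cc (N'11 U) * LL = fps_scale U cc (N''22 U)"
  proof (rule fps_ext)
    fix n show "(fps_scale U cc (N'11 U) * LL) $ n = fps_scale U cc (N''22 U) $ n"
    proof (cases n)
      case 0 thus ?thesis by (simp only: fps_mult_nth_0 scaleN11_nth LL_nth) (simp add: fps_scale_def N''22_nth e1)
    next
      case (Suc m) thus ?thesis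
        by (cases m) (simp_all only: case1[unfolded One_nat_def] case2)
    qed
  qed
  have "LL = (Gs cc * fps_scale U cc (N'11 U)) * LL" by (simp add: GM)
  also have "\<dots> = Gs cc * fps_scale U cc (N''22 U)" by (simp only: mult.assoc hML)
  finally show ?thesis by (simp add: invG)
qed
end

theorem mainTheorem5:
  fixes U :: "('a::ring_1) Uq"
  assumes "is_Uq_gl3 U"
    and "(qq (hbar U))\<^sup>2 \<noteq> 1"
    and "br2 (hbar U) \<noteq> 0"
  shows "B0 U = Fg1 U * qx U (-1, -1, 0) \<and>
         E_alpha U = fps_const (emb U (inverse (kap (hbar U)))) * N'21 U
                     * fps_inv1 (fps_scale U (- (inverse (qq (hbar U)) ^ 2)) (N'11 U)) \<and>
         E_delta_alpha U = fps_const (emb U (inverse (kap (hbar U)) * inverse (qq (hbar U))))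
                     * fps_inv1 (fps_scale U (- (inverse (qq (hbar U)) ^ 2)) (N'11 U)) * N'12 U \<and>
         1 + fps_const (emb U (kap (hbar U))) * E'_alpha U
           = fps_inv1 (fps_scale U (- (inverse (qq (hbar U)) ^ 2)) (N'11 U))
             * fps_scale U (- (inverse (qq (hbar U)) ^ 2)) (N''22 U)"
proof -
  interpret uq U using assms by unfold_locales
  show ?thesis using partI partII partIII partIV by blast
qed
end
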